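(* Let $\mathcal{G}=(\mathcal{V},\mathcal{A})$ be a finite directed graph with vertex weights $\{q_i\}_{i\in\mathcal{V}}$. Apply the following pruning procedure: for each leaf SCC of $\mathcal{G}$, with vertex set $\mathcal{V}_S$, select a vertex $i\in\arg\min_{a\in\mathcal{V}_S} q_a$ (arbitrarily among minimizers) and remove all outgoing arcs of $i$. Let $\mathcal{G}^{\mathrm{p}}=(\mathcal{V}^{\mathrm{p}},\mathcal{A}^{\mathrm{p}})$ be the resulting graph. Then $\mathcal{V}^{\mathrm{p}}=\mathcal{V}$, $\mathcal{A}^{\mathrm{p}}\subseteq\mathcal{A}$, and \[ \sum_{i:\ i \text{ is a predecessor of some vertex in } \mathcal{L}(\mathcal{G}^{\mathrm{p}})} q_i = \sum_{k\in\mathcal{V}} q_k - \sum_{i\in\mathcal{L}(\mathcal{G})} q_i - \sum_{\mathcal{V}_S\in\mathbb{V}} \min_{a\in\mathcal{V}_S} q_a, \] where $\mathbb{V}$ is the set of vertex sets of all leaf SCCs of $\mathcal{G}$.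
   Context: A leaf vertex is a vertex with no outgoing arcs; $\mathcal{L}(\mathcal{H})$ denotes the set of leaf vertices of a directed graph $\mathcal{H}$. A vertex $j$ is a predecessor of vertex $i$ iff there is a directed path from $j$ to $i$. A strongly connected component (SCC) is a maximal subgraph in which every ordered pair of vertices is joined by a directed path inside the subgraph. A leaf SCC is an SCC with at least two vertices from which no arc goes to a vertex outside the SCC. *)

theory Defs
  imports Complex_Main
begin

definition leaves :: "'a set \<Rightarrow> ('a \<times> 'a) set \<Rightarrow> 'a set" where
  "leaves V A = {i \<in> V. \<not> (\<exists>j. (i, j) \<in> A)}"

definition is_pred :: "('a \<times> 'a) set \<Rightarrow> 'a \<Rightarrow> 'a \<Rightarrow> bool" where
  "is_pred A j i \<longleftrightarrow> (j, i) \<in> A\<^sup>+"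

definition strongly_connected :: "('a \<times> 'a) set \<Rightarrow> 'a set \<Rightarrow> bool" where
  "strongly_connected A S \<longleftrightarrow> (\<forall>x\<in>S. \<forall>y\<in>S. (x, y) \<in> (A \<inter> (S \<times> S))\<^sup>*)"

definition is_scc :: "'a set \<Rightarrow> ('a \<times> 'a) set \<Rightarrow> 'a set \<Rightarrow> bool" where
  "is_scc V A S \<longleftrightarrow> S \<subseteq> V \<and> S \<noteq> {} \<and> strongly_connected A S \<and>
     (\<forall>T. S \<subseteq> T \<and> T \<subseteq> V \<and> strongly_connected A T \<longrightarrow> T = S)"

definition is_leaf_scc :: "'a set \<Rightarrow> ('a \<times> 'a) set \<Rightarrow> 'a set \<Rightarrow> bool" where
  "is_leaf_scc V A S \<longleftrightarrow> is_scc V A S \<and> card S \<ge> 2 \<and>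
     (\<forall>x y. (x, y) \<in> A \<and> x \<in> S \<longrightarrow> y \<in> S)"

definition prune :: "'a set \<Rightarrow> ('a \<times> 'a) set \<Rightarrow> ('a set \<Rightarrow> 'a) \<Rightarrow> 'a set \<times> ('a \<times> 'a) set" where
  "prune V A sel = (V, A - {(i, j). \<exists>S. is_leaf_scc V A S \<and> i = sel S})"

end

theory Submission
  imports Defs
begin

lemma rtrancl_inside:
  assumes "(x, y) \<in> r\<^sup>*"
  shows "(x, y) \<in> (r \<inter> ({z. (x,z) \<in> r\<^sup>*} \<times> {z. (x,z) \<in> r\<^sup>*}))\<^sup>*"
  using assms
proof (induction rule: rtrancl_induct)
  case base then show ?case by simp
next
  case (step y z)
  then have "(y, z) \<in> r \<inter> ({z. (x,z) \<in> r\<^sup>*} \<times> {z. (x,z) \<in> r\<^sup>*})" by auto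
  with step show ?case by (meson rtrancl.rtrancl_into_rtrancl)
qed

lemma closed_rtrancl:
  assumes "(x, y) \<in> r\<^sup>*" "x \<in> C" "\<forall>a b. (a,b) \<in> r \<and> a \<in> C \<longrightarrow> b \<in> C"
  shows "y \<in> C"
  using assms(1)
proof (induction rule: rtrancl_induct)
  case base then show ?case using assms(2) .
next
  case (step y z)
  have "(y, z) \<in> r \<and> y \<in> C" using step.hyps(2) step.IH by simp
  then show ?case using assms(3) by simp
qed

lemma leaf_scc_path:
  assumes "is_leaf_scc V A S" "x \<in> S" "y \<in> S"
  shows "(x, y) \<in> (A \<inter> S \<times> S)\<^sup>*"
  using assms unfolding is_leaf_scc_def is_scc_def strongly_connected_def by simp

lemma leaf_scc_closed:
  assumes "is_leaf_scc V A S"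
  shows "\<forall>a b. (a,b) \<in> A \<and> a \<in> S \<longrightarrow> b \<in> S"
  using assms unfolding is_leaf_scc_def by simp

lemma leaf_scc_sub:
  assumes "is_leaf_scc V A S1" "is_leaf_scc V A S2" "x \<in> S1" "x \<in> S2"
  shows "S1 \<subseteq> S2"
proof
  fix y assume "y \<in> S1"
  then have "(x, y) \<in> (A \<inter> S1 \<times> S1)\<^sup>*" using leaf_scc_path[OF assms(1) assms(3)] by simp
  then have "(x,y) \<in> A\<^sup>*" using rtrancl_mono[of "A \<inter> S1 \<times> S1" A] by blast
  then show "y \<in> S2" using closed_rtrancl[OF _ assms(4) leaf_scc_closed[OF assms(2)]] by simp
qed

lemma leaf_scc_sel_eq:
  assumes "is_leaf_scc V A S1" "is_leaf_scc V A S2" "x \<in> S1" "x \<in> S2"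
  shows "S1 = S2"
  using leaf_scc_sub[OF assms] leaf_scc_sub[OF assms(2,1,4,3)] by (rule equalityI)

lemma leaf_scc_has_arc:
  assumes "is_leaf_scc V A S" "x \<in> S"
  shows "\<exists>y. (x, y) \<in> A"
proof -
  have c: "card S \<ge> 2" using assms unfolding is_leaf_scc_def by simp
  then have fin: "finite S" using card.infinite by force
  have "\<not> S \<subseteq> {x}"
  proof
    assume "S \<subseteq> {x}"
    then have "card S \<le> card {x}" by (intro card_mono) auto
    then show False using c by simp
  qed
  then obtain y where y: "y \<in> S" "y \<noteq> x" by blast
  have "(x, y) \<in> (A \<inter> S \<times> S)\<^sup>*" using leaf_scc_path[OF assms y(1)] .
  then have "(x, y) \<in> (A \<inter> S \<times> S)\<^sup>+" using y(2) by (auto dest: rtranclD)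
  then obtain z where "(x, z) \<in> A \<inter> S \<times> S" by (auto dest: tranclD)
  then show ?thesis by blast
qed

theorem lemma7:
  fixes V :: "'a set" and A :: "('a \<times> 'a) set" and q :: "'a \<Rightarrow> real"
    and sel :: "'a set \<Rightarrow> 'a" and Vp :: "'a set" and Ap :: "('a \<times> 'a) set"
  assumes "finite V"
    and "A \<subseteq> V \<times> V"
    and "\<forall>x. (x, x) \<notin> A"
    and "\<forall>S. is_leaf_scc V A S \<longrightarrow> sel S \<in> S \<and> q (sel S) = Min (q ` S)"
    and "(Vp, Ap) = prune V A sel"
  shows "Vp = V \<and> Ap \<subseteq> A \<and>
    (\<Sum>i\<in>{i \<in> Vp. \<exists>l \<in> leaves Vp Ap. is_pred Ap i l}. q i)
      = (\<Sum>k\<in>V. q k) - (\<Sum>i\<in>leaves V A. q i)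
        - (\<Sum>S\<in>{S. is_leaf_scc V A S}. Min (q ` S))"
proof -
  note fV = assms(1) and AV = assms(2) and noloop = assms(3) and selp = assms(4)
  define L where "L = {S. is_leaf_scc V A S}"
  have Vp: "Vp = V" and Ap: "Ap = A - {(i, j). \<exists>S. is_leaf_scc V A S \<and> i = sel S}"
    using assms(5) unfolding prune_def by auto
  have ApA: "Ap \<subseteq> A" using Ap by blast
  have ApV: "Ap \<subseteq> V \<times> V" using ApA AV by blast
  have selnoarc: "(sel S, y) \<notin> Ap" if "is_leaf_scc V A S" for S y using that Ap by blast
  have LS: "S \<subseteq> V" if "S \<in> L" for S using that unfolding L_def is_leaf_scc_def is_scc_def by blast
  have selV: "sel S \<in> V" if "S \<in> L" for S using LS[OF that] selp that unfolding L_def by blast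
  have leavesp: "leaves V Ap = leaves V A \<union> sel ` L"
  proof
    show "leaves V Ap \<subseteq> leaves V A \<union> sel ` L"
    proof
      fix x assume x: "x \<in> leaves V Ap"
      show "x \<in> leaves V A \<union> sel ` L"
      proof (cases "\<exists>y. (x,y) \<in> A")
        case True
        then obtain y where "(x,y) \<in> A" by blast
        moreover have "(x,y) \<notin> Ap" using x unfolding leaves_def by blast
        ultimately obtain S where "is_leaf_scc V A S" "x = sel S" using Ap by blast
        then show ?thesis unfolding L_def by blast
      next
        case False then show ?thesis using x unfolding leaves_def by blast
      qed
    qed
    show "leaves V A \<union> sel ` L \<subseteq> leaves V Ap"
      using ApA selV selnoarc unfolding leaves_def L_def by blast
  qed
  have disj: "leaves V A \<inter> sel ` L = {}"
  proof -
    { fix S assume "S \<in> L"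
      then have S: "is_leaf_scc V A S" unfolding L_def by simp
      then have "sel S \<in> S" using selp by simp
      then have "\<exists>y. (sel S, y) \<in> A" using leaf_scc_has_arc[OF S] by simp
      then have "sel S \<notin> leaves V A" unfolding leaves_def by blast }
    then show ?thesis by blast
  qed
  have injsel: "inj_on sel L"
  proof (rule inj_onI)
    fix S1 S2 assume "S1 \<in> L" "S2 \<in> L" "sel S1 = sel S2"
    then have a: "is_leaf_scc V A S1" "is_leaf_scc V A S2" unfolding L_def by auto
    then have "sel S1 \<in> S1" "sel S2 \<in> S2" using selp by auto
    then show "S1 = S2" using leaf_scc_sel_eq[OF a] \<open>sel S1 = sel S2\<close> by metis
  qed
  have finL: "finite L"
  proof -
    have "L \<subseteq> Pow V" using LS by blast
    then show ?thesis using fV by (meson finite_Pow_iff finite_subset)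
  qed
  have predset: "{i \<in> V. \<exists>l \<in> leaves V Ap. is_pred Ap i l} = V - leaves V Ap"
  proof
    show "{i \<in> V. \<exists>l \<in> leaves V Ap. is_pred Ap i l} \<subseteq> V - leaves V Ap"
    proof
      fix i assume "i \<in> {i \<in> V. \<exists>l \<in> leaves V Ap. is_pred Ap i l}"
      then obtain l where "i \<in> V" "(i,l) \<in> Ap\<^sup>+" unfolding is_pred_def by blast
      then show "i \<in> V - leaves V Ap" unfolding leaves_def by (auto dest: tranclD)
    qed
    show "V - leaves V Ap \<subseteq> {i \<in> V. \<exists>l \<in> leaves V Ap. is_pred Ap i l}"
    proof
      fix i assume i: "i \<in> V - leaves V Ap"
      define R where "R u = {y. (u,y) \<in> Ap\<^sup>*}" for u
      have RV: "R u \<subseteq> V" if "u \<in> V" for u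
      proof
        fix y assume "y \<in> R u"
        then have "(u,y) \<in> Ap\<^sup>*" unfolding R_def by blast
        then show "y \<in> V" using that ApV by (induction rule: rtrancl_induct) auto
      qed
      have finR: "finite (R u)" if "u \<in> V" for u using RV[OF that] fV finite_subset by blast
      obtain w where w: "w \<in> R i" and wmin: "\<forall>u. u \<in> R i \<longrightarrow> card (R w) \<le> card (R u)"
        using ex_has_least_nat[of "\<lambda>u. u \<in> R i" i "\<lambda>u. card (R u)"] unfolding R_def by auto
      have iV: "i \<in> V" using i by blast
      have wV: "w \<in> V" using RV[OF iV] w by blast
      have Rsub: "R u \<subseteq> R w" if "u \<in> R w" for u
        using that unfolding R_def by (auto intro: rtrancl_trans)
      have Req: "R u = R w" if "u \<in> R w" for u
      proof -
        have uRi: "u \<in> R i" using that w unfolding R_def by (auto intro: rtrancl_trans)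
        have uV: "u \<in> V" using RV[OF wV] that by blast
        have c1: "card (R u) \<le> card (R w)" using card_mono[OF finR[OF wV] Rsub[OF that]] .
        have c2: "card (R w) \<le> card (R u)" using wmin uRi by blast
        show ?thesis using card_subset_eq[OF finR[OF wV] Rsub[OF that]] c1 c2 by linarith
      qed
      have bk: "(u, w) \<in> Ap\<^sup>*" if "u \<in> R w" for u
        using Req[OF that] unfolding R_def by blast
      show "i \<in> {i \<in> V. \<exists>l \<in> leaves V Ap. is_pred Ap i l}"
      proof (cases "w \<in> leaves V Ap")
        case True
        have "w \<noteq> i" using True i by blast
        then have "(i,w) \<in> Ap\<^sup>+" using w unfolding R_def by (auto dest: rtranclD)
        then show ?thesis using iV True unfolding is_pred_def by blast
      next
        case False
        define C where "C = R w"
        have hasarc: "\<exists>z. (x,z) \<in> Ap" if "x \<in> C" for x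
        proof (cases "x = w")
          case True then show ?thesis using False wV unfolding leaves_def by blast
        next
          case nw: False
          have "(x,w) \<in> Ap\<^sup>+" using bk[of x] that nw unfolding C_def by (auto dest: rtranclD)
          then show ?thesis by (auto dest: tranclD)
        qed
        have notsel: "x \<noteq> sel S" if "x \<in> C" "is_leaf_scc V A S" for x S
          using hasarc[OF that(1)] selnoarc[OF that(2)] by blast
        have closedA: "\<forall>a b. (a,b) \<in> A \<and> a \<in> C \<longrightarrow> b \<in> C"
        proof (intro allI impI)
          fix a b assume ab: "(a,b) \<in> A \<and> a \<in> C"
          have "(a,b) \<notin> {(i, j). \<exists>S. is_leaf_scc V A S \<and> i = sel S}" using notsel ab by blast
          then have "(a,b) \<in> Ap" unfolding Ap using ab by blast
          then show "b \<in> C" using ab unfolding C_def R_def by (auto intro: rtrancl_into_rtrancl)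
        qed
        have sc: "strongly_connected A C"
          unfolding strongly_connected_def
        proof (intro ballI)
          fix x y assume x: "x \<in> C" and y: "y \<in> C"
          have "(x,y) \<in> Ap\<^sup>*" using bk[of x] x y unfolding C_def R_def by (auto intro: rtrancl_trans)
          then have "(x,y) \<in> (Ap \<inter> (R x \<times> R x))\<^sup>*" using rtrancl_inside unfolding R_def by fastforce
          moreover have "R x = C" using Req x unfolding C_def by blast
          ultimately have "(x,y) \<in> (Ap \<inter> (C \<times> C))\<^sup>*" by simp
          moreover have "Ap \<inter> (C \<times> C) \<subseteq> A \<inter> (C \<times> C)" using ApA by blast
          ultimately show "(x,y) \<in> (A \<inter> (C \<times> C))\<^sup>*" using rtrancl_mono by blast
        qed
        have wC: "w \<in> C" unfolding C_def R_def by simp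
        obtain z where z: "(w,z) \<in> Ap" using hasarc[OF wC] by blast
        have zw: "z \<noteq> w" using z ApA noloop by blast
        have zC: "z \<in> C" using z unfolding C_def R_def by auto
        have finC: "finite C" using finR[OF wV] unfolding C_def .
        have "card {w, z} \<le> card C" using wC zC finC by (intro card_mono) auto
        then have c2: "card C \<ge> 2" using zw by simp
        have maxl: "\<forall>T. C \<subseteq> T \<and> T \<subseteq> V \<and> strongly_connected A T \<longrightarrow> T = C"
        proof (intro allI impI)
          fix T assume T: "C \<subseteq> T \<and> T \<subseteq> V \<and> strongly_connected A T"
          have "T \<subseteq> C"
          proof
            fix t assume t: "t \<in> T"
            have "(w,t) \<in> (A \<inter> T \<times> T)\<^sup>*" using T t wC unfolding strongly_connected_def by blast
            then have "(w,t) \<in> A\<^sup>*" by (meson Int_lower1 rtrancl_mono subsetD)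
            then show "t \<in> C" using closed_rtrancl[OF _ wC closedA] by blast
          qed
          then show "T = C" using T by blast
        qed
        have CV: "C \<subseteq> V" using RV[OF wV] unfolding C_def .
        have Cne: "C \<noteq> {}" using wC by blast
        have "is_leaf_scc V A C"
          unfolding is_leaf_scc_def is_scc_def
          using CV Cne sc maxl c2 closedA by (intro conjI) auto
        then have "sel C \<in> C" using selp[rule_format, OF \<open>is_leaf_scc V A C\<close>] by simp
        then show ?thesis using notsel \<open>is_leaf_scc V A C\<close> by blast
      qed
    qed
  qed
  have lvV: "leaves V A \<subseteq> V" unfolding leaves_def by blast
  have finlv: "finite (leaves V A)" using lvV fV finite_subset by blast
  have selLV: "sel ` L \<subseteq> V" using selV by blast
  have "(\<Sum>i\<in>V - leaves V Ap. q i) = (\<Sum>k\<in>V. q k) - (\<Sum>i\<in>leaves V Ap. q i)"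
    using leavesp lvV selLV fV by (subst sum_diff) (auto intro: finite_subset)
  also have "(\<Sum>i\<in>leaves V Ap. q i) = (\<Sum>i\<in>leaves V A. q i) + (\<Sum>i\<in>sel ` L. q i)"
    unfolding leavesp using disj finlv finL by (intro sum.union_disjoint) auto
  also have "(\<Sum>i\<in>sel ` L. q i) = (\<Sum>S\<in>L. q (sel S))"
    using injsel by (simp add: sum.reindex)
  also have "\<dots> = (\<Sum>S\<in>L. Min (q ` S))"
    using selp unfolding L_def by (intro sum.cong) auto
  finally have main: "(\<Sum>i\<in>V - leaves V Ap. q i) = (\<Sum>k\<in>V. q k) - (\<Sum>i\<in>leaves V A. q i) - (\<Sum>S\<in>L. Min (q ` S))"
    by simp
  show ?thesis using Vp ApA predset main unfolding L_def by simp
qed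

end
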